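(* For any $d\geq 4$, there is no maximally $\psi$-epistemic ontological model that reproduces the quantum predictions for a quantum system with Hilbert space $\mathbb{C}^d$.
   Context: An ontological model for a quantum system with Hilbert space $\mathbb{C}^d$ consists of: a measure space $\Lambda$ of "ontic states" (with measure $\mathrm{d}\lambda$); for every pure state $\ket{\psi}$, a probability density $\mu_\psi$ on $\Lambda$; and for every projective measurement $M$ with outcomes $f$ (corresponding to orthogonal projectors $P_f$ summing to the identity), response functions $\xi_M(f|\lambda)\geq 0$ with $\sum_f \xi_M(f|\lambda)=1$ for all $\lambda$. The model reproduces the quantum predictions if $\int_\Lambda \xi_M(f|\lambda)\mu_\psi(\lambda)\,\mathrm{d}\lambda = \bra{\psi}P_f\ket{\psi}$ for all pure states $\ket{\psi}$, all projective measurements $M$ and outcomes $f$. The classical overlap of densities $p,q$ is $\omega_C(p,q)=\int\min\{p(x),q(x)\}\,\mathrm{d}x$; the quantum overlap of pure states is $\omega_Q(\psi,\phi)=1-\sqrt{1-|\braket{\psi|\phi}|^2}$. The model is maximally $\psi$-epistemic if $\omega_C(\mu_\psi,\mu_\phi)=\omega_Q(\psi,\phi)$ for all pairs of pure states $\ket{\psi},\ket{\phi}$. *)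

theory Defs
  imports "HOL-Analysis.Analysis"
begin

text \<open>Pure states of C^d are represented by unit vectors in complex^'n, with d = CARD('n).\<close>

definition qinner :: "complex ^ 'n \<Rightarrow> complex ^ 'n \<Rightarrow> complex" where
  "qinner \<psi> \<phi> = (\<Sum>i\<in>UNIV. cnj (\<psi> $ i) * \<phi> $ i)"

definition pure_state :: "complex ^ 'n \<Rightarrow> bool" where
  "pure_state \<psi> \<longleftrightarrow> qinner \<psi> \<psi> = 1"

definition adjoint_mat :: "complex ^ 'n ^ 'n \<Rightarrow> complex ^ 'n ^ 'n" where
  "adjoint_mat P = (\<chi> i j. cnj (P $ j $ i))"

definition orth_projector :: "complex ^ 'n ^ 'n \<Rightarrow> bool" where
  "orth_projector P \<longleftrightarrow> P ** P = P \<and> adjoint_mat P = P"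

text \<open>A projective measurement: a finite set of orthogonal projectors, pairwise orthogonal,
  summing to the identity. Its outcomes are identified with its projectors.\<close>
definition projective_measurement :: "(complex ^ 'n ^ 'n) set \<Rightarrow> bool" where
  "projective_measurement M \<longleftrightarrow> finite M \<and> (\<forall>P\<in>M. orth_projector P)
     \<and> (\<forall>P\<in>M. \<forall>Q\<in>M. P \<noteq> Q \<longrightarrow> P ** Q = 0)
     \<and> (\<Sum>P\<in>M. P) = mat 1"

text \<open>Ontological model on the measure space L (the ontic states with measure d lambda):
  densities mu psi, response functions xi M P.\<close>
definition ontological_model ::
  "'l measure \<Rightarrow> (complex ^ 'n \<Rightarrow> 'l \<Rightarrow> real)
     \<Rightarrow> ((complex ^ 'n ^ 'n) set \<Rightarrow> complex ^ 'n ^ 'n \<Rightarrow> 'l \<Rightarrow> real) \<Rightarrow> bool" where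
  "ontological_model L \<mu> \<xi> \<longleftrightarrow>
     (\<forall>\<psi>. pure_state \<psi> \<longrightarrow>
        \<mu> \<psi> \<in> borel_measurable L \<and> (\<forall>x\<in>space L. 0 \<le> \<mu> \<psi> x)
        \<and> integrable L (\<mu> \<psi>) \<and> integral\<^sup>L L (\<mu> \<psi>) = 1)
   \<and> (\<forall>M. projective_measurement M \<longrightarrow>
        (\<forall>P\<in>M. \<xi> M P \<in> borel_measurable L \<and> (\<forall>x\<in>space L. 0 \<le> \<xi> M P x))
        \<and> (\<forall>x\<in>space L. (\<Sum>P\<in>M. \<xi> M P x) = 1))"

definition reproduces_quantum ::
  "'l measure \<Rightarrow> (complex ^ 'n \<Rightarrow> 'l \<Rightarrow> real)
     \<Rightarrow> ((complex ^ 'n ^ 'n) set \<Rightarrow> complex ^ 'n ^ 'n \<Rightarrow> 'l \<Rightarrow> real) \<Rightarrow> bool" where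
  "reproduces_quantum L \<mu> \<xi> \<longleftrightarrow>
     (\<forall>\<psi> M. pure_state \<psi> \<longrightarrow> projective_measurement M \<longrightarrow>
        (\<forall>P\<in>M. integral\<^sup>L L (\<lambda>x. \<xi> M P x * \<mu> \<psi> x) = Re (qinner \<psi> (P *v \<psi>))))"

definition classical_overlap :: "'l measure \<Rightarrow> ('l \<Rightarrow> real) \<Rightarrow> ('l \<Rightarrow> real) \<Rightarrow> real" where
  "classical_overlap L p q = integral\<^sup>L L (\<lambda>x. min (p x) (q x))"

definition quantum_overlap :: "complex ^ 'n \<Rightarrow> complex ^ 'n \<Rightarrow> real" where
  "quantum_overlap \<psi> \<phi> = 1 - sqrt (1 - (cmod (qinner \<psi> \<phi>))\<^sup>2)"

definition maximally_psi_epistemic ::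
  "'l measure \<Rightarrow> (complex ^ 'n \<Rightarrow> 'l \<Rightarrow> real) \<Rightarrow> bool" where
  "maximally_psi_epistemic L \<mu> \<longleftrightarrow>
     (\<forall>\<psi> \<phi>. pure_state \<psi> \<longrightarrow> pure_state \<phi> \<longrightarrow>
        classical_overlap L (\<mu> \<psi>) (\<mu> \<phi>) = quantum_overlap \<psi> \<phi>)"

end

theory Submission
  imports Defs
begin


lemma xi_le1:
  assumes om: "ontological_model L \<mu> \<xi>" and M: "projective_measurement M" and P: "P \<in> M"
    and x: "x \<in> space L"
  shows "\<xi> M P x \<le> 1"
proof -
  have fin: "finite M" using M unfolding projective_measurement_def by auto
  have nn: "\<forall>Q\<in>M. 0 \<le> \<xi> M Q x" and s: "(\<Sum>Q\<in>M. \<xi> M Q x) = 1"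
    using om M x unfolding ontological_model_def by auto
  have "\<xi> M P x \<le> (\<Sum>Q\<in>M. \<xi> M Q x)"
    by (rule member_le_sum[OF P]) (use nn fin in auto)
  with s show ?thesis by simp
qed

lemma excl:
  assumes om: "ontological_model L \<mu> \<xi>" and rq: "reproduces_quantum L \<mu> \<xi>"
    and M: "projective_measurement M" and P: "P \<in> M" and s: "pure_state s"
    and z: "Re (qinner s (P *v s)) = 0"
  shows "AE x in L. \<xi> M P x * \<mu> s x = 0"
proof -
  have mu: "\<mu> s \<in> borel_measurable L" "\<forall>x\<in>space L. 0 \<le> \<mu> s x" "integrable L (\<mu> s)"
    using om s unfolding ontological_model_def by auto
  have xi: "\<xi> M P \<in> borel_measurable L" "\<forall>x\<in>space L. 0 \<le> \<xi> M P x"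
    using om M P unfolding ontological_model_def by auto
  have int: "integrable L (\<lambda>x. \<xi> M P x * \<mu> s x)"
  proof (rule Bochner_Integration.integrable_bound[OF mu(3)])
    show "(\<lambda>x. \<xi> M P x * \<mu> s x) \<in> borel_measurable L" using mu xi by measurable
    show "AE x in L. norm (\<xi> M P x * \<mu> s x) \<le> norm (\<mu> s x)"
    proof (rule AE_I2)
      fix x assume x: "x \<in> space L"
      have "\<xi> M P x \<le> 1" by (rule xi_le1[OF om M P x])
      then show "norm (\<xi> M P x * \<mu> s x) \<le> norm (\<mu> s x)"
        using xi(2) mu(2) x by (simp add: abs_mult mult_left_le_one_le)
    qed
  qed
  have "integral\<^sup>L L (\<lambda>x. \<xi> M P x * \<mu> s x) = 0"
    using rq s M P z unfolding reproduces_quantum_def by auto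
  moreover have "AE x in L. 0 \<le> \<xi> M P x * \<mu> s x"
    using xi(2) mu(2) by (intro AE_I2) auto
  ultimately show ?thesis using integral_nonneg_eq_0_iff_AE[OF int] by simp
qed


lemma aux3:
  fixes t a b c :: real
  assumes "0 \<le> t" "0 \<le> a" "0 \<le> b" "0 \<le> c" "t*a = 0 \<or> t*b = 0 \<or> t*c = 0"
  shows "t * min a (min b c) = 0"
  using assms by (auto simp: min_def)

lemma triple_zero:
  assumes om: "ontological_model L \<mu> \<xi>" and rq: "reproduces_quantum L \<mu> \<xi>"
    and M: "projective_measurement M"
    and s: "pure_state s1" "pure_state s2" "pure_state s3"
    and cov: "\<forall>P\<in>M. Re (qinner s1 (P *v s1)) = 0 \<or> Re (qinner s2 (P *v s2)) = 0
                    \<or> Re (qinner s3 (P *v s3)) = 0"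
  shows "AE x in L. min (\<mu> s1 x) (min (\<mu> s2 x) (\<mu> s3 x)) = 0"
proof -
  have fin: "finite M" using M unfolding projective_measurement_def by auto
  have "\<forall>P\<in>M. AE x in L. \<xi> M P x * min (\<mu> s1 x) (min (\<mu> s2 x) (\<mu> s3 x)) = 0"
  proof
    fix P assume P: "P \<in> M"
    have e1: "Re (qinner s1 (P *v s1)) = 0 \<Longrightarrow> AE x in L. \<xi> M P x * \<mu> s1 x = 0"
      by (rule excl[OF om rq M P s(1)])
    have e2: "Re (qinner s2 (P *v s2)) = 0 \<Longrightarrow> AE x in L. \<xi> M P x * \<mu> s2 x = 0"
      by (rule excl[OF om rq M P s(2)])
    have e3: "Re (qinner s3 (P *v s3)) = 0 \<Longrightarrow> AE x in L. \<xi> M P x * \<mu> s3 x = 0"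
      by (rule excl[OF om rq M P s(3)])
    have dis: "AE x in L. \<xi> M P x * \<mu> s1 x = 0 \<or> \<xi> M P x * \<mu> s2 x = 0 \<or> \<xi> M P x * \<mu> s3 x = 0"
    proof -
      from cov P consider (1) "Re (qinner s1 (P *v s1)) = 0" | (2) "Re (qinner s2 (P *v s2)) = 0"
        | (3) "Re (qinner s3 (P *v s3)) = 0" by blast
      then show ?thesis
      proof cases
        case 1 show ?thesis using e1[OF 1] by (rule eventually_mono) simp
      next
        case 2 show ?thesis using e2[OF 2] by (rule eventually_mono) simp
      next
        case 3 show ?thesis using e3[OF 3] by (rule eventually_mono) simp
      qed
    qed
    have nn: "AE x in L. 0 \<le> \<xi> M P x \<and> 0 \<le> \<mu> s1 x \<and> 0 \<le> \<mu> s2 x \<and> 0 \<le> \<mu> s3 x"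
      using om M P s unfolding ontological_model_def by (intro AE_I2) auto
    show "AE x in L. \<xi> M P x * min (\<mu> s1 x) (min (\<mu> s2 x) (\<mu> s3 x)) = 0"
      using dis nn by eventually_elim (rule aux3, auto)
  qed
  then have all: "AE x in L. \<forall>P\<in>M. \<xi> M P x * min (\<mu> s1 x) (min (\<mu> s2 x) (\<mu> s3 x)) = 0"
    by (rule eventually_ball_finite[OF fin])
  show ?thesis
    using all AE_space
  proof eventually_elim
    case (elim x)
    have "(\<Sum>P\<in>M. \<xi> M P x) = 1" using om M elim unfolding ontological_model_def by auto
    then have "min (\<mu> s1 x) (min (\<mu> s2 x) (\<mu> s3 x))
        = (\<Sum>P\<in>M. \<xi> M P x * min (\<mu> s1 x) (min (\<mu> s2 x) (\<mu> s3 x)))"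
      by (simp add: sum_distrib_right[symmetric])
    also have "\<dots> = 0" using elim by auto
    finally show ?case .
  qed
qed

lemma overlap_zero_AE:
  assumes om: "ontological_model L \<mu> \<xi>" and me: "maximally_psi_epistemic L \<mu>"
    and s: "pure_state s" "pure_state t" and o: "qinner s t = 0"
  shows "AE x in L. min (\<mu> s x) (\<mu> t x) = 0"
proof -
  have "classical_overlap L (\<mu> s) (\<mu> t) = quantum_overlap s t"
    using me s unfolding maximally_psi_epistemic_def by auto
  then have i0: "integral\<^sup>L L (\<lambda>x. min (\<mu> s x) (\<mu> t x)) = 0"
    using o unfolding classical_overlap_def quantum_overlap_def by simp
  have int: "integrable L (\<lambda>x. min (\<mu> s x) (\<mu> t x))"
    using om s unfolding ontological_model_def by auto
  have "AE x in L. 0 \<le> min (\<mu> s x) (\<mu> t x)"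
    using om s unfolding ontological_model_def by (intro AE_I2) auto
  then show ?thesis using integral_nonneg_eq_0_iff_AE[OF int] i0 by simp
qed

lemma aux_min:
  fixes a b c :: real
  shows "min a (min b c) = 0 \<Longrightarrow> 0 \<le> c \<Longrightarrow> 0 < min a b \<Longrightarrow> min a c = 0"
  by (simp add: min_def split: if_split_asm)

lemma star_bound:
  fixes \<phi> :: "nat \<Rightarrow> complex ^ 'n"
  assumes om: "ontological_model L \<mu> \<xi>" and s: "pure_state \<psi>" "\<And>i. i < N \<Longrightarrow> pure_state (\<phi> i)"
    and z: "\<And>i j. i < N \<Longrightarrow> j < N \<Longrightarrow> i \<noteq> j \<Longrightarrow>
              AE x in L. min (\<mu> \<psi> x) (min (\<mu> (\<phi> i) x) (\<mu> (\<phi> j) x)) = 0"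
  shows "(\<Sum>i<N. classical_overlap L (\<mu> \<psi>) (\<mu> (\<phi> i))) \<le> 1"
proof -
  have intp: "integrable L (\<mu> \<psi>)" "integral\<^sup>L L (\<mu> \<psi>) = 1"
    using om s unfolding ontological_model_def by auto
  have inti: "\<And>i. i < N \<Longrightarrow> integrable L (\<lambda>x. min (\<mu> \<psi> x) (\<mu> (\<phi> i) x))"
    using om s unfolding ontological_model_def by auto
  have allz: "AE x in L. \<forall>p\<in>{..<N}\<times>{..<N}. fst p \<noteq> snd p \<longrightarrow>
       min (\<mu> \<psi> x) (min (\<mu> (\<phi> (fst p)) x) (\<mu> (\<phi> (snd p)) x)) = 0"
    by (subst eventually_ball_finite) (auto intro!: z)
  have pt: "AE x in L. (\<Sum>i<N. min (\<mu> \<psi> x) (\<mu> (\<phi> i) x)) \<le> \<mu> \<psi> x"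
    using allz AE_space
  proof eventually_elim
    case (elim x)
    have nn: "0 \<le> \<mu> \<psi> x" "\<And>i. i < N \<Longrightarrow> 0 \<le> \<mu> (\<phi> i) x"
      using om s elim unfolding ontological_model_def by auto
    show ?case
    proof (cases "\<exists>i<N. 0 < min (\<mu> \<psi> x) (\<mu> (\<phi> i) x)")
      case False
      then have le0: "\<And>i. i < N \<Longrightarrow> min (\<mu> \<psi> x) (\<mu> (\<phi> i) x) \<le> 0"
        using not_less by blast
      have "(\<Sum>i<N. min (\<mu> \<psi> x) (\<mu> (\<phi> i) x)) \<le> (\<Sum>i<N. 0)"
        by (rule sum_mono) (simp add: le0)
      then show ?thesis using nn by simp
    next
      case True
      then obtain i where i: "i < N" "0 < min (\<mu> \<psi> x) (\<mu> (\<phi> i) x)" by auto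
      have oth: "\<And>j. j \<in> {..<N} - {i} \<Longrightarrow> min (\<mu> \<psi> x) (\<mu> (\<phi> j) x) = 0"
      proof -
        fix j assume j: "j \<in> {..<N} - {i}"
        then have "min (\<mu> \<psi> x) (min (\<mu> (\<phi> i) x) (\<mu> (\<phi> j) x)) = 0"
          using elim i by auto
        moreover have "0 \<le> \<mu> (\<phi> j) x" using nn j by auto
        ultimately show "min (\<mu> \<psi> x) (\<mu> (\<phi> j) x) = 0" using i(2)
          by (rule aux_min)
      qed
      have "(\<Sum>i<N. min (\<mu> \<psi> x) (\<mu> (\<phi> i) x))
          = min (\<mu> \<psi> x) (\<mu> (\<phi> i) x) + (\<Sum>j\<in>{..<N} - {i}. min (\<mu> \<psi> x) (\<mu> (\<phi> j) x))"
        using i by (subst sum.remove[of _ i]) auto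
      also have "\<dots> = min (\<mu> \<psi> x) (\<mu> (\<phi> i) x)" using oth by simp
      also have "\<dots> \<le> \<mu> \<psi> x" by simp
      finally show ?thesis .
    qed
  qed
  have "(\<Sum>i<N. classical_overlap L (\<mu> \<psi>) (\<mu> (\<phi> i)))
        = integral\<^sup>L L (\<lambda>x. \<Sum>i<N. min (\<mu> \<psi> x) (\<mu> (\<phi> i) x))"
    unfolding classical_overlap_def by (rule Bochner_Integration.integral_sum[symmetric], rule inti, simp)
  also have "\<dots> \<le> integral\<^sup>L L (\<mu> \<psi>)"
    by (rule integral_mono_AE[OF _ intp(1) pt]) (rule Bochner_Integration.integrable_sum, rule inti, simp)
  finally show ?thesis using intp by simp
qed



definition outer :: "complex ^ 'n \<Rightarrow> complex ^ 'n \<Rightarrow> complex ^ 'n ^ 'n" where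
  "outer u v = (\<chi> i j. u $ i * cnj (v $ j))"

lemma mm_add_r: "((A::complex^'n^'n) + B) ** C = A ** C + B ** C"
  by (simp add: matrix_matrix_mult_def vec_eq_iff sum.distrib algebra_simps)
lemma mm_diff_r: "((A::complex^'n^'n) - B) ** C = A ** C - B ** C"
  by (simp add: matrix_matrix_mult_def vec_eq_iff sum_subtractf algebra_simps)
lemma mm_diff_l: "(C::complex^'n^'n) ** (A - B) = C ** A - C ** B"
  by (simp add: matrix_matrix_mult_def vec_eq_iff sum_subtractf algebra_simps)

lemma outer_mult: "outer u v ** outer w z = (\<chi> i j. qinner v w * (u $ i * cnj (z $ j)))"
  unfolding outer_def matrix_matrix_mult_def qinner_def
  by (simp add: vec_eq_iff sum_distrib_left sum_distrib_right mult_ac)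

lemma outer_orth: "qinner u v = 0 \<Longrightarrow> outer u u ** outer v v = 0"
  by (simp add: outer_mult vec_eq_iff)

lemma outer_idem: "qinner u u = 1 \<Longrightarrow> outer u u ** outer u u = outer u u"
  by (simp add: outer_mult) (simp add: outer_def)

lemma adj_outer: "adjoint_mat (outer u u) = outer u u"
  by (simp add: adjoint_mat_def outer_def vec_eq_iff mult.commute)

lemma adj_add: "adjoint_mat (A + B) = adjoint_mat A + adjoint_mat B"
  by (simp add: adjoint_mat_def vec_eq_iff)
lemma adj_diff: "adjoint_mat (A - B) = adjoint_mat A - adjoint_mat B"
  by (simp add: adjoint_mat_def vec_eq_iff)
lemma adj_one: "adjoint_mat (mat 1 :: complex^'n^'n) = mat 1"
  by (simp add: adjoint_mat_def vec_eq_iff mat_def)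

lemma outer_mv: "outer u v *v w = qinner v w *s u"
  unfolding outer_def matrix_vector_mult_def qinner_def
  by (simp add: vec_eq_iff sum_distrib_left mult_ac)

lemma qinner_add: "qinner s (x + y) = qinner s x + qinner s y"
  by (simp add: qinner_def algebra_simps sum.distrib)
lemma qinner_diff: "qinner s (x - y) = qinner s x - qinner s y"
  by (simp add: qinner_def algebra_simps sum_subtractf)
lemma qinner_smult: "qinner s (c *s y) = c * qinner s y"
  by (simp add: qinner_def sum_distrib_left mult_ac)
lemma qinner_cnj: "qinner s u = cnj (qinner u s)"
  by (simp add: qinner_def mult.commute)

lemma mv_add: "((A::complex^'n^'n) + B) *v x = A *v x + B *v x"
  by (simp add: matrix_vector_mult_add_rdistrib)
lemma mv_diff: "((A::complex^'n^'n) - B) *v x = A *v x - B *v x"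
  by (simp add: matrix_vector_mult_diff_rdistrib)

lemma excl_P: "qinner s (outer u u *v s) = qinner u s * cnj (qinner u s)"
  by (simp add: outer_mv qinner_smult qinner_cnj[of s u])

locale onb4 =
  fixes u1 u2 u3 u4 :: "complex ^ 'n"
  assumes n1: "qinner u1 u1 = 1" and n2: "qinner u2 u2 = 1" and n3: "qinner u3 u3 = 1"
    and n4: "qinner u4 u4 = 1"
    and o12: "qinner u1 u2 = 0" and o13: "qinner u1 u3 = 0" and o14: "qinner u1 u4 = 0"
    and o23: "qinner u2 u3 = 0" and o24: "qinner u2 u4 = 0" and o34: "qinner u3 u4 = 0"
begin

abbreviation "P1 \<equiv> outer u1 u1"
abbreviation "P2 \<equiv> outer u2 u2"
abbreviation "P3 \<equiv> outer u3 u3"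
abbreviation "P4 \<equiv> outer u4 u4"
definition "S = P1 + P2 + P3 + P4"
definition "Q = mat 1 - S"
definition "Meas = {P1, P2, P3, P4, Q}"

lemma o21: "qinner u2 u1 = 0" using o12 qinner_cnj[of u2 u1] by simp
lemma o31: "qinner u3 u1 = 0" using o13 qinner_cnj[of u3 u1] by simp
lemma o41: "qinner u4 u1 = 0" using o14 qinner_cnj[of u4 u1] by simp
lemma o32: "qinner u3 u2 = 0" using o23 qinner_cnj[of u3 u2] by simp
lemma o42: "qinner u4 u2 = 0" using o24 qinner_cnj[of u4 u2] by simp
lemma o43: "qinner u4 u3 = 0" using o34 qinner_cnj[of u4 u3] by simp

lemmas orths = o12 o13 o14 o23 o24 o34 o21 o31 o41 o32 o42 o43 n1 n2 n3 n4

lemma SP1: "S ** P1 = P1" unfolding S_def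
  by (simp add: mm_add_r outer_orth outer_idem orths)
lemma SP2: "S ** P2 = P2" unfolding S_def
  by (simp add: mm_add_r outer_orth outer_idem orths)
lemma SP3: "S ** P3 = P3" unfolding S_def
  by (simp add: mm_add_r outer_orth outer_idem orths)
lemma SP4: "S ** P4 = P4" unfolding S_def
  by (simp add: mm_add_r outer_orth outer_idem orths)
lemma P1S: "P1 ** S = P1" unfolding S_def
  by (simp add: matrix_add_ldistrib outer_orth outer_idem orths)
lemma P2S: "P2 ** S = P2" unfolding S_def
  by (simp add: matrix_add_ldistrib outer_orth outer_idem orths)
lemma P3S: "P3 ** S = P3" unfolding S_def
  by (simp add: matrix_add_ldistrib outer_orth outer_idem orths)
lemma P4S: "P4 ** S = P4" unfolding S_def
  by (simp add: matrix_add_ldistrib outer_orth outer_idem orths)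
lemma SS: "S ** S = S"
proof -
  have "S ** S = S ** P1 + S ** P2 + S ** P3 + S ** P4" by (metis S_def matrix_add_ldistrib)
  then show ?thesis by (simp only: SP1 SP2 SP3 SP4) (simp only: S_def)
qed

lemma QQ: "Q ** Q = Q"
  unfolding Q_def by (simp add: mm_diff_r mm_diff_l SS)
lemma QP: "Q ** P1 = 0" "Q ** P2 = 0" "Q ** P3 = 0" "Q ** P4 = 0"
  unfolding Q_def by (simp_all add: mm_diff_r SP1 SP2 SP3 SP4)
lemma PQ: "P1 ** Q = 0" "P2 ** Q = 0" "P3 ** Q = 0" "P4 ** Q = 0"
  unfolding Q_def by (simp_all add: mm_diff_l P1S P2S P3S P4S)
lemma adjQ: "adjoint_mat Q = Q"
  unfolding Q_def S_def by (simp add: adj_diff adj_add adj_one adj_outer)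

lemma mvs: "P1 *v u1 = u1" "P2 *v u2 = u2" "P3 *v u3 = u3" "P4 *v u4 = u4"
  "P1 *v u2 = 0" "P1 *v u3 = 0" "P1 *v u4 = 0"
  "P2 *v u1 = 0" "P2 *v u3 = 0" "P2 *v u4 = 0"
  "P3 *v u1 = 0" "P3 *v u2 = 0" "P3 *v u4 = 0"
  "P4 *v u1 = 0" "P4 *v u2 = 0" "P4 *v u3 = 0"
  by (simp_all add: outer_mv orths vec_eq_iff)

lemma Qv: "Q *v u1 = 0" "Q *v u2 = 0" "Q *v u3 = 0" "Q *v u4 = 0"
  unfolding Q_def S_def by (simp_all add: mv_diff mv_add mvs)

lemma nz: "u1 \<noteq> 0" "u2 \<noteq> 0" "u3 \<noteq> 0" "u4 \<noteq> 0"
  using n1 n2 n3 n4 by (auto simp: qinner_def)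

lemma distinct: "distinct [P1, P2, P3, P4, Q]"
proof -
  have h: "\<And>A B (u::complex^'n). A *v u = u \<Longrightarrow> B *v u = 0 \<Longrightarrow> u \<noteq> 0 \<Longrightarrow> A \<noteq> B \<and> B \<noteq> A"
    by auto
  show ?thesis using h[OF mvs(1) mvs(8) nz(1)] h[OF mvs(1) mvs(11) nz(1)] h[OF mvs(1) mvs(14) nz(1)]
    h[OF mvs(1) Qv(1) nz(1)] h[OF mvs(2) mvs(12) nz(2)] h[OF mvs(2) mvs(15) nz(2)]
    h[OF mvs(2) Qv(2) nz(2)] h[OF mvs(3) mvs(16) nz(3)] h[OF mvs(3) Qv(3) nz(3)] h[OF mvs(4) Qv(4) nz(4)]
    by auto
qed

lemma meas: "projective_measurement Meas"
proof -
  have d: "distinct [P1, P2, P3, P4, Q]" by (rule distinct)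
  have proj: "\<forall>P\<in>Meas. orth_projector P"
    unfolding Meas_def orth_projector_def using QQ adjQ
    by (auto simp: outer_idem adj_outer orths)
  have orth: "\<forall>P\<in>Meas. \<forall>R\<in>Meas. P \<noteq> R \<longrightarrow> P ** R = 0"
    unfolding Meas_def using QP PQ by (auto simp: outer_orth orths)
  have "(\<Sum>P\<in>Meas. P) = P1 + (P2 + (P3 + (P4 + Q)))"
    unfolding Meas_def using d by simp
  also have "\<dots> = mat 1" unfolding Q_def S_def by (simp add: algebra_simps)
  finally show ?thesis unfolding projective_measurement_def using proj orth
    by (auto simp: Meas_def)
qed

lemma excl_Q: "qinner s (Q *v s) = qinner s s - (qinner u1 s * cnj (qinner u1 s)
   + qinner u2 s * cnj (qinner u2 s) + qinner u3 s * cnj (qinner u3 s) + qinner u4 s * cnj (qinner u4 s))"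
  unfolding Q_def S_def by (simp add: mv_diff mv_add qinner_diff qinner_add excl_P)

end



definition dot :: "real list \<Rightarrow> real list \<Rightarrow> real" where
  "dot u v = u!0 * v!0 + u!1 * v!1 + u!2 * v!2 + u!3 * v!3"

lemma "dot [1,1,1,-1] [1,-1,1,-1] = 2" by (simp add: dot_def)

context
  fixes a b c d :: "'n::finite"
  assumes dist: "distinct [a,b,c,d]"
begin

lemma ne: "a \<noteq> b" "a \<noteq> c" "a \<noteq> d" "b \<noteq> c" "b \<noteq> d" "c \<noteq> d"
  "b \<noteq> a" "c \<noteq> a" "d \<noteq> a" "c \<noteq> b" "d \<noteq> b" "d \<noteq> c"
  using dist by auto

definition emb :: "real \<Rightarrow> real list \<Rightarrow> complex ^ 'n" where
  "emb r v = (\<chi> i. complex_of_real (r * (if i = a then v!0 else if i = b then v!1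
      else if i = c then v!2 else if i = d then v!3 else 0)))"

definition uv :: "real list \<Rightarrow> complex ^ 'n" where
  "uv v = emb (1 / sqrt (dot v v)) v"

lemma qinner_emb: "qinner (emb r u) (emb s v) = complex_of_real (r * s * dot u v)"
proof -
  let ?g = "\<lambda>i. cnj (emb r u $ i) * emb s v $ i"
  have "qinner (emb r u) (emb s v) = (\<Sum>i\<in>UNIV. ?g i)" by (simp add: qinner_def)
  also have "\<dots> = (\<Sum>i\<in>{a,b,c,d}. ?g i)"
    by (rule sum.mono_neutral_right) (auto simp: emb_def)
  also have "\<dots> = complex_of_real (r * s * dot u v)"
    by (simp add: ne emb_def dot_def algebra_simps)
  finally show ?thesis .
qed

definition qq :: "real list \<Rightarrow> real list \<Rightarrow> real" where
  "qq u v = dot u v / (sqrt (dot u u) * sqrt (dot v v))"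

lemma qinner_uv: "qinner (uv u) (uv v) = complex_of_real (qq u v)"
  unfolding uv_def qinner_emb qq_def by simp

lemma pure_uv: "dot v v > 0 \<Longrightarrow> pure_state (uv v)"
  unfolding pure_state_def qinner_uv qq_def
  by (simp add: real_sqrt_mult[symmetric])

lemma qq_sq: "dot u u > 0 \<Longrightarrow> dot v v > 0 \<Longrightarrow> (qq u v)^2 = (dot u v)^2 / (dot u u * dot v v)"
  unfolding qq_def by (simp add: power_divide power_mult_distrib)


lemma qq_zero: "dot u v = 0 \<Longrightarrow> qq u v = 0" by (simp add: qq_def)
lemma qq_one: "dot u u > 0 \<Longrightarrow> qq u u = 1" by (simp add: qq_def real_sqrt_mult[symmetric])

lemma Re_excl_P: "Re (qinner (uv v) (outer (uv w) (uv w) *v uv v)) = (qq w v)^2"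
  by (simp add: excl_P qinner_uv power2_eq_square)

lemma triple_lists:
  assumes om: "ontological_model L \<mu> \<xi>" and rq: "reproduces_quantum L \<mu> \<xi>"
    and w: "dot w1 w2 = 0" "dot w1 w3 = 0" "dot w1 w4 = 0" "dot w2 w3 = 0" "dot w2 w4 = 0" "dot w3 w4 = 0"
      "0 < dot w1 w1" "0 < dot w2 w2" "0 < dot w3 w3" "0 < dot w4 w4"
    and v: "0 < dot v1 v1" "0 < dot v2 v2" "0 < dot v3 v3"
    and c: "dot w1 v1 = 0 \<or> dot w1 v2 = 0 \<or> dot w1 v3 = 0"
      "dot w2 v1 = 0 \<or> dot w2 v2 = 0 \<or> dot w2 v3 = 0"
      "dot w3 v1 = 0 \<or> dot w3 v2 = 0 \<or> dot w3 v3 = 0"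
      "dot w4 v1 = 0 \<or> dot w4 v2 = 0 \<or> dot w4 v3 = 0"
    and pars: "(dot w1 v1)^2 / dot w1 w1 + (dot w2 v1)^2 / dot w2 w2 + (dot w3 v1)^2 / dot w3 w3
       + (dot w4 v1)^2 / dot w4 w4 = dot v1 v1"
  shows "AE x in L. min (\<mu> (uv v1) x) (min (\<mu> (uv v2) x) (\<mu> (uv v3) x)) = 0"
proof -
  interpret O: onb4 "uv w1" "uv w2" "uv w3" "uv w4"
    by unfold_locales (simp_all add: qinner_uv qq_zero qq_one w)
  have qqz: "\<And>w v. dot w v = 0 \<Longrightarrow> (qq w v)^2 = 0" by (simp add: qq_zero)
  have cP: "\<And>w. dot w v1 = 0 \<or> dot w v2 = 0 \<or> dot w v3 = 0 \<Longrightarrow>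
     Re (qinner (uv v1) (outer (uv w) (uv w) *v uv v1)) = 0 \<or>
     Re (qinner (uv v2) (outer (uv w) (uv w) *v uv v2)) = 0 \<or>
     Re (qinner (uv v3) (outer (uv w) (uv w) *v uv v3)) = 0"
    unfolding Re_excl_P using qqz by blast
  have "Re (qinner (uv v1) (O.Q *v uv v1)) = 1 - ((qq w1 v1)^2 + (qq w2 v1)^2 + (qq w3 v1)^2 + (qq w4 v1)^2)"
    by (simp add: O.excl_Q qinner_uv qq_one v power2_eq_square)
  also have "\<dots> = 1 - ((dot w1 v1)^2 / dot w1 w1 + (dot w2 v1)^2 / dot w2 w2 + (dot w3 v1)^2 / dot w3 w3
       + (dot w4 v1)^2 / dot w4 w4) / dot v1 v1"
    using w v by (simp add: qq_sq add_divide_distrib)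
  also have "\<dots> = 0" using pars v by simp
  finally have cQ: "Re (qinner (uv v1) (O.Q *v uv v1)) = 0" .
  show ?thesis
  proof (rule triple_zero[OF om rq O.meas])
    show "pure_state (uv v1)" "pure_state (uv v2)" "pure_state (uv v3)" using v by (simp_all add: pure_uv)
    show "\<forall>P\<in>O.Meas. Re (qinner (uv v1) (P *v uv v1)) = 0 \<or> Re (qinner (uv v2) (P *v uv v2)) = 0 \<or>
        Re (qinner (uv v3) (P *v uv v3)) = 0"
      unfolding O.Meas_def using cP[OF c(1)] cP[OF c(2)] cP[OF c(3)] cP[OF c(4)] cQ by auto
  qed
qed


lemma orth_lists:
  assumes om: "ontological_model L \<mu> \<xi>" and me: "maximally_psi_epistemic L \<mu>"
    and "dot v w = 0" "0 < dot v v" "0 < dot w w" "0 < dot p p"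
  shows "AE x in L. min (\<mu> (uv p) x) (min (\<mu> (uv v) x) (\<mu> (uv w) x)) = 0"
proof -
  have z: "AE x in L. min (\<mu> (uv v) x) (\<mu> (uv w) x) = 0"
    by (rule overlap_zero_AE[OF om me]) (use assms in \<open>simp_all add: pure_uv qinner_uv qq_zero\<close>)
  have "AE x in L. 0 \<le> \<mu> (uv p) x"
    using om assms pure_uv unfolding ontological_model_def by (intro AE_I2) auto
  with z show ?thesis by eventually_elim simp
qed

lemma AE_swap:
  "AE x in L. min (f x) (min (g x) (h x)) = (0::real) \<Longrightarrow> AE x in L. min (f x) (min (h x) (g x)) = 0"
  by (erule eventually_mono) (simp add: min.commute)

definition V :: "nat \<Rightarrow> real list" where
  "V i = [[1,0,0,0],[0,1,0,0],[0,0,1,0],[0,0,0,1],[1,1,1,1],[1,-1,1,-1],[1,1,-1,-1],[1,-1,-1,1]] ! i"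

lemma no_model:
  fixes \<mu> :: "complex ^ 'n \<Rightarrow> 'l \<Rightarrow> real"
  assumes om: "ontological_model L \<mu> \<xi>" and rq: "reproduces_quantum L \<mu> \<xi>"
    and me: "maximally_psi_epistemic L \<mu>"
  shows False
proof -
  have T_0_4: "AE x in L. min (\<mu> (uv [1,1,1,-1]) x) (min (\<mu> (uv [1,0,0,0]) x) (\<mu> (uv [1,1,1,1]) x)) = 0"
    by (rule triple_lists[OF om rq, of "[0,0,1,0]" "[0,1,0,0]" "[1,0,0,-1]" "[1,0,0,1]"]) (simp_all add: dot_def)
  have T_0_5: "AE x in L. min (\<mu> (uv [1,1,1,-1]) x) (min (\<mu> (uv [1,0,0,0]) x) (\<mu> (uv [1,-1,1,-1]) x)) = 0"
    by (rule triple_lists[OF om rq, of "[0,0,0,1]" "[0,0,1,0]" "[1,-1,0,0]" "[1,1,0,0]"]) (simp_all add: dot_def)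
  have T_0_6: "AE x in L. min (\<mu> (uv [1,1,1,-1]) x) (min (\<mu> (uv [1,0,0,0]) x) (\<mu> (uv [1,1,-1,-1]) x)) = 0"
    by (rule triple_lists[OF om rq, of "[0,0,0,1]" "[0,1,0,0]" "[1,0,-1,0]" "[1,0,1,0]"]) (simp_all add: dot_def)
  have T_0_7: "AE x in L. min (\<mu> (uv [1,1,1,-1]) x) (min (\<mu> (uv [1,0,0,0]) x) (\<mu> (uv [1,-1,-1,1]) x)) = 0"
    by (rule triple_lists[OF om rq, of "[0,0,0,1]" "[0,0,1,0]" "[1,-1,0,0]" "[1,1,0,0]"]) (simp_all add: dot_def)
  have T_1_4: "AE x in L. min (\<mu> (uv [1,1,1,-1]) x) (min (\<mu> (uv [0,1,0,0]) x) (\<mu> (uv [1,1,1,1]) x)) = 0"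
    by (rule triple_lists[OF om rq, of "[0,0,1,0]" "[0,1,0,-1]" "[0,1,0,1]" "[1,0,0,0]"]) (simp_all add: dot_def)
  have T_1_5: "AE x in L. min (\<mu> (uv [1,1,1,-1]) x) (min (\<mu> (uv [0,1,0,0]) x) (\<mu> (uv [1,-1,1,-1]) x)) = 0"
    by (rule triple_lists[OF om rq, of "[0,0,0,1]" "[0,0,1,0]" "[1,-1,0,0]" "[1,1,0,0]"]) (simp_all add: dot_def)
  have T_1_6: "AE x in L. min (\<mu> (uv [1,1,1,-1]) x) (min (\<mu> (uv [0,1,0,0]) x) (\<mu> (uv [1,1,-1,-1]) x)) = 0"
    by (rule triple_lists[OF om rq, of "[0,0,0,1]" "[0,1,-1,0]" "[0,1,1,0]" "[1,0,0,0]"]) (simp_all add: dot_def)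
  have T_1_7: "AE x in L. min (\<mu> (uv [1,1,1,-1]) x) (min (\<mu> (uv [0,1,0,0]) x) (\<mu> (uv [1,-1,-1,1]) x)) = 0"
    by (rule triple_lists[OF om rq, of "[0,0,0,1]" "[0,0,1,0]" "[1,-1,0,0]" "[1,1,0,0]"]) (simp_all add: dot_def)
  have T_2_4: "AE x in L. min (\<mu> (uv [1,1,1,-1]) x) (min (\<mu> (uv [0,0,1,0]) x) (\<mu> (uv [1,1,1,1]) x)) = 0"
    by (rule triple_lists[OF om rq, of "[0,0,1,-1]" "[0,0,1,1]" "[0,1,0,0]" "[1,0,0,0]"]) (simp_all add: dot_def)
  have T_2_5: "AE x in L. min (\<mu> (uv [1,1,1,-1]) x) (min (\<mu> (uv [0,0,1,0]) x) (\<mu> (uv [1,-1,1,-1]) x)) = 0"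
    by (rule triple_lists[OF om rq, of "[0,0,0,1]" "[0,1,-1,0]" "[0,1,1,0]" "[1,0,0,0]"]) (simp_all add: dot_def)
  have T_2_6: "AE x in L. min (\<mu> (uv [1,1,1,-1]) x) (min (\<mu> (uv [0,0,1,0]) x) (\<mu> (uv [1,1,-1,-1]) x)) = 0"
    by (rule triple_lists[OF om rq, of "[0,0,0,1]" "[0,1,-1,0]" "[0,1,1,0]" "[1,0,0,0]"]) (simp_all add: dot_def)
  have T_2_7: "AE x in L. min (\<mu> (uv [1,1,1,-1]) x) (min (\<mu> (uv [0,0,1,0]) x) (\<mu> (uv [1,-1,-1,1]) x)) = 0"
    by (rule triple_lists[OF om rq, of "[0,0,0,1]" "[0,1,0,0]" "[1,0,-1,0]" "[1,0,1,0]"]) (simp_all add: dot_def)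
  have T_3_4: "AE x in L. min (\<mu> (uv [1,1,1,-1]) x) (min (\<mu> (uv [0,0,0,1]) x) (\<mu> (uv [1,1,1,1]) x)) = 0"
    by (rule triple_lists[OF om rq, of "[0,0,1,-1]" "[0,0,1,1]" "[0,1,0,0]" "[1,0,0,0]"]) (simp_all add: dot_def)
  have T_3_5: "AE x in L. min (\<mu> (uv [1,1,1,-1]) x) (min (\<mu> (uv [0,0,0,1]) x) (\<mu> (uv [1,-1,1,-1]) x)) = 0"
    by (rule triple_lists[OF om rq, of "[0,0,1,0]" "[0,1,0,-1]" "[0,1,0,1]" "[1,0,0,0]"]) (simp_all add: dot_def)
  have T_3_6: "AE x in L. min (\<mu> (uv [1,1,1,-1]) x) (min (\<mu> (uv [0,0,0,1]) x) (\<mu> (uv [1,1,-1,-1]) x)) = 0"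
    by (rule triple_lists[OF om rq, of "[0,0,1,-1]" "[0,0,1,1]" "[0,1,0,0]" "[1,0,0,0]"]) (simp_all add: dot_def)
  have T_3_7: "AE x in L. min (\<mu> (uv [1,1,1,-1]) x) (min (\<mu> (uv [0,0,0,1]) x) (\<mu> (uv [1,-1,-1,1]) x)) = 0"
    by (rule triple_lists[OF om rq, of "[0,0,1,0]" "[0,1,0,0]" "[1,0,0,-1]" "[1,0,0,1]"]) (simp_all add: dot_def)

  have Z: "\<And>i j. i < 8 \<Longrightarrow> j < 8 \<Longrightarrow> i \<noteq> j \<Longrightarrow>
     AE x in L. min (\<mu> (uv [1,1,1,-1]) x) (min (\<mu> (uv (V i)) x) (\<mu> (uv (V j)) x)) = 0"
  proof -
    fix i j :: nat assume i: "i < 8" and j: "j < 8" and ij: "i \<noteq> j"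
    show "AE x in L. min (\<mu> (uv [1,1,1,-1]) x) (min (\<mu> (uv (V i)) x) (\<mu> (uv (V j)) x)) = 0"
    proof -
      have ci: "i = 0 \<or> i = 1 \<or> i = 2 \<or> i = 3 \<or> i = 4 \<or> i = 5 \<or> i = 6 \<or> i = 7" using i by auto
      have cj: "j = 0 \<or> j = 1 \<or> j = 2 \<or> j = 3 \<or> j = 4 \<or> j = 5 \<or> j = 6 \<or> j = 7" using j by auto
      show ?thesis using ci cj ij
        by (elim disjE) (simp_all add: V_def T_0_4 AE_swap[OF T_0_4] T_0_5 AE_swap[OF T_0_5] T_0_6 AE_swap[OF T_0_6] T_0_7 AE_swap[OF T_0_7] T_1_4 AE_swap[OF T_1_4] T_1_5 AE_swap[OF T_1_5] T_1_6 AE_swap[OF T_1_6] T_1_7 AE_swap[OF T_1_7] T_2_4 AE_swap[OF T_2_4] T_2_5 AE_swap[OF T_2_5] T_2_6 AE_swap[OF T_2_6] T_2_7 AE_swap[OF T_2_7] T_3_4 AE_swap[OF T_3_4] T_3_5 AE_swap[OF T_3_5] T_3_6 AE_swap[OF T_3_6] T_3_7 AE_swap[OF T_3_7] orth_lists[OF om me] dot_def)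
    qed
  qed
  have pure: "\<And>i. i < 8 \<Longrightarrow> pure_state (uv (V i))"
  proof -
    fix i :: nat assume i: "i < 8"
    have ci: "i = 0 \<or> i = 1 \<or> i = 2 \<or> i = 3 \<or> i = 4 \<or> i = 5 \<or> i = 6 \<or> i = 7" using i by auto
    show "pure_state (uv (V i))" using ci by (elim disjE) (simp_all add: V_def pure_uv dot_def)
  qed
  have ppsi: "pure_state (uv [1,1,1,-1])" by (simp add: pure_uv dot_def)
  have sb: "(\<Sum>i<8. classical_overlap L (\<mu> (uv [1,1,1,-1])) (\<mu> (uv (V i)))) \<le> 1"
    by (rule star_bound[OF om ppsi, of 8 "\<lambda>i. uv (V i)"]) (use pure Z in auto)
  have ov: "\<And>i. i < 8 \<Longrightarrow> classical_overlap L (\<mu> (uv [1,1,1,-1])) (\<mu> (uv (V i))) = 1 - sqrt (3/4)"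
  proof -
    fix i :: nat assume i: "i < 8"
    have "classical_overlap L (\<mu> (uv [1,1,1,-1])) (\<mu> (uv (V i))) = quantum_overlap (uv [1,1,1,-1]) (uv (V i))"
      using me ppsi pure[OF i] unfolding maximally_psi_epistemic_def by auto
    also have "\<dots> = 1 - sqrt (1 - (qq [1,1,1,-1] (V i))^2)"
      unfolding quantum_overlap_def qinner_uv by simp
    also have "(qq [1,1,1,-1] (V i))^2 = 1/4"
    proof -
      have ci: "i = 0 \<or> i = 1 \<or> i = 2 \<or> i = 3 \<or> i = 4 \<or> i = 5 \<or> i = 6 \<or> i = 7" using i by auto
      show ?thesis using ci by (elim disjE) (simp_all add: V_def qq_sq dot_def)
    qed
    finally show "classical_overlap L (\<mu> (uv [1,1,1,-1])) (\<mu> (uv (V i))) = 1 - sqrt (3/4)" by simp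
  qed
  have "(\<Sum>i<8. classical_overlap L (\<mu> (uv [1,1,1,-1])) (\<mu> (uv (V i)))) = (\<Sum>i<(8::nat). 1 - sqrt (3/4))"
    by (rule sum.cong) (auto simp: ov)
  also have "\<dots> = 8 * (1 - sqrt (3/4))" by simp
  finally have "8 * (1 - sqrt (3/4)) \<le> (1::real)" using sb by simp
  moreover have "sqrt (3/4) < sqrt ((7/8)^2)" by (simp add: power2_eq_square)
  then have "sqrt (3/4) < (7/8::real)" by simp
  ultimately show False by simp
qed

end

lemma four_distinct:
  assumes "CARD('n::finite) \<ge> 4"
  shows "\<exists>a b c d :: 'n. distinct [a,b,c,d]"
proof -
  obtain T :: "'n set" where T: "card T = 4"
    using obtain_subset_with_card_n[OF assms] by blast
  then show ?thesis by (auto simp: card_Suc_eq numeral_eq_Suc)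
qed

theorem corollary1:
  fixes L :: "'l measure"
  assumes "CARD('n::finite) \<ge> 4"
  shows "\<not> (\<exists>(\<mu> :: complex ^ 'n \<Rightarrow> 'l \<Rightarrow> real) \<xi>.
            ontological_model L \<mu> \<xi> \<and> reproduces_quantum L \<mu> \<xi>
            \<and> maximally_psi_epistemic L \<mu>)"
proof
  assume "\<exists>(\<mu> :: complex ^ 'n \<Rightarrow> 'l \<Rightarrow> real) \<xi>.
            ontological_model L \<mu> \<xi> \<and> reproduces_quantum L \<mu> \<xi>
            \<and> maximally_psi_epistemic L \<mu>"
  then obtain \<mu> :: "complex ^ 'n \<Rightarrow> 'l \<Rightarrow> real" and \<xi> where
    h: "ontological_model L \<mu> \<xi>" "reproduces_quantum L \<mu> \<xi>" "maximally_psi_epistemic L \<mu>"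
    by blast
  obtain a b c d :: 'n where dist: "distinct [a,b,c,d]" using four_distinct[OF assms] by blast
  show False by (rule no_model[OF dist h])
qed

end
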